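(* Let $H$ be a complex Hilbert space, let $P \in \mathcal{L}(H)$ be an orthogonal projection satisfying the property $\mathcal{AN}$, and let $\eta > 1/2$ be a real number. Then the operator $T := \eta I - P$ satisfies the property $\mathcal{AN}^*$.
   Context: $\mathcal{L}(H)$ is the space of bounded linear operators on $H$. For a closed subspace $M \neq \{0\}$ of $H$ and $A \in \mathcal{L}(H)$: $A|_M$ satisfies $\mathcal{N}$ if there is $x_0 \in M$ with $\|x_0\|=1$ and $\|Ax_0\| = \sup\{\|Ax\| : x\in M, \|x\|=1\}$; $A|_M$ satisfies $\mathcal{N}^*$ if there is $x_0 \in M$ with $\|x_0\|=1$ and $\|Ax_0\| = \inf\{\|Ax\| : x\in M, \|x\|=1\}$. $A$ satisfies the property $\mathcal{AN}$ (resp. $\mathcal{AN}^*$) if $A|_M$ satisfies $\mathcal{N}$ (resp. $\mathcal{N}^*$) for every closed subspace $M \neq \{0\}$ of $H$. *)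

theory Defs
  imports "HOL-Analysis.Analysis"
begin

text \<open>The underlying real normed vector space structure is
the restriction of scalars to the reals.\<close>

class complex_inner = real_normed_vector +
  fixes scaleC :: "complex \<Rightarrow> 'a \<Rightarrow> 'a"
    and cinner :: "'a \<Rightarrow> 'a \<Rightarrow> complex"
  assumes scaleR_scaleC: "scaleR r x = scaleC (complex_of_real r) x"
    and scaleC_add_right: "scaleC a (x + y) = scaleC a x + scaleC a y"
    and scaleC_add_left: "scaleC (a + b) x = scaleC a x + scaleC b x"
    and scaleC_scaleC: "scaleC a (scaleC b x) = scaleC (a * b) x"
    and scaleC_one: "scaleC 1 x = x"
    and cinner_commute: "cinner x y = cnj (cinner y x)"
    and cinner_add_left: "cinner (x + y) z = cinner x z + cinner y z"
    and cinner_scaleC_left: "cinner (scaleC a x) y = cnj a * cinner x y"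
    and cinner_self_real: "Im (cinner x x) = 0"
    and cinner_self_nonneg: "0 \<le> Re (cinner x x)"
    and cinner_self_eq_zero: "cinner x x = 0 \<longleftrightarrow> x = 0"
    and norm_eq_sqrt_cinner: "norm x = sqrt (Re (cinner x x))"

class chilbert_space = complex_inner + complete_space

definition bounded_clinear :: "('a::complex_inner \<Rightarrow> 'b::complex_inner) \<Rightarrow> bool" where
  "bounded_clinear A \<longleftrightarrow> bounded_linear A \<and> (\<forall>c x. A (scaleC c x) = scaleC c (A x))"

definition closed_csubspace :: "'a::complex_inner set \<Rightarrow> bool" where
  "closed_csubspace M \<longleftrightarrow> closed M \<and> 0 \<in> M \<and> (\<forall>x\<in>M. \<forall>y\<in>M. x + y \<in> M)
     \<and> (\<forall>c. \<forall>x\<in>M. scaleC c x \<in> M)"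

definition is_orth_proj :: "('a::complex_inner \<Rightarrow> 'a) \<Rightarrow> bool" where
  "is_orth_proj P \<longleftrightarrow> bounded_clinear P \<and> (\<forall>x. P (P x) = P x)
     \<and> (\<forall>x y. cinner (P x) y = cinner x (P y))"

definition satisfies_N :: "('a::complex_inner \<Rightarrow> 'b::complex_inner) \<Rightarrow> 'a set \<Rightarrow> bool" where
  "satisfies_N A M \<longleftrightarrow> (\<exists>x0\<in>M. norm x0 = 1 \<and>
     norm (A x0) = Sup {norm (A x) | x. x \<in> M \<and> norm x = 1})"

definition satisfies_Nstar :: "('a::complex_inner \<Rightarrow> 'b::complex_inner) \<Rightarrow> 'a set \<Rightarrow> bool" where
  "satisfies_Nstar A M \<longleftrightarrow> (\<exists>x0\<in>M. norm x0 = 1 \<and>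
     norm (A x0) = Inf {norm (A x) | x. x \<in> M \<and> norm x = 1})"

definition has_AN :: "('a::complex_inner \<Rightarrow> 'b::complex_inner) \<Rightarrow> bool" where
  "has_AN A \<longleftrightarrow> (\<forall>M. closed_csubspace M \<and> M \<noteq> {0} \<longrightarrow> satisfies_N A M)"

definition has_ANstar :: "('a::complex_inner \<Rightarrow> 'b::complex_inner) \<Rightarrow> bool" where
  "has_ANstar A \<longleftrightarrow> (\<forall>M. closed_csubspace M \<and> M \<noteq> {0} \<longrightarrow> satisfies_Nstar A M)"

end

theory Submission
  imports Defs
begin

context complex_inner
begin

lemma ci_zero_left: "cinner 0 y = 0"
proof -
  have "cinner (0+0) y = cinner 0 y + cinner 0 y" by (rule cinner_add_left)
  then show ?thesis by simp
qed

lemma ci_add_right: "cinner x (y + z) = cinner x y + cinner x z"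
  by (metis cinner_commute cinner_add_left complex_cnj_add)

lemma ci_scaleR_left: "cinner (scaleR r x) y = complex_of_real r * cinner x y"
  by (simp add: scaleR_scaleC cinner_scaleC_left)

lemma ci_scaleR_right: "cinner x (scaleR r y) = complex_of_real r * cinner x y"
  by (metis ci_scaleR_left cinner_commute complex_cnj_mult complex_cnj_complex_of_real)

lemma ci_minus_left: "cinner (- x) y = - cinner x y"
proof -
  have "cinner (x + - x) y = cinner x y + cinner (-x) y" by (rule cinner_add_left)
  then have "cinner x y + cinner (-x) y = 0" by (simp add: ci_zero_left)
  then show ?thesis using Groups.group_add_class.minus_unique[of "cinner x y" "cinner (-x) y"] by simp
qed

lemma ci_diff_left: "cinner (x - y) z = cinner x z - cinner y z"
proof -
  have "cinner (x - y) z = cinner (x + - y) z" by (simp only: diff_conv_add_uminus)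
  also have "\<dots> = cinner x z + cinner (-y) z" by (rule cinner_add_left)
  also have "\<dots> = cinner x z - cinner y z" by (simp only: ci_minus_left) simp
  finally show ?thesis .
qed

lemma ci_diff_right: "cinner x (y - z) = cinner x y - cinner x z"
  by (metis ci_diff_left cinner_commute complex_cnj_diff)

lemma norm_sq_ci: "(norm x)^2 = Re (cinner x x)"
  using norm_eq_sqrt_cinner cinner_self_nonneg by simp

lemma norm_sq_orth:
  assumes "cinner u v = 0"
  shows "(norm (scaleR a v + scaleR b u))^2 = a^2 * (norm v)^2 + b^2 * (norm u)^2"
proof -
  have vu: "cinner v u = 0" using assms cinner_commute by (metis complex_cnj_zero)
  have "cinner (scaleR a v + scaleR b u) (scaleR a v + scaleR b u)
      = complex_of_real (a*a) * cinner v v + complex_of_real (b*b) * cinner u u"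
    by (simp add: cinner_add_left ci_add_right ci_scaleR_left ci_scaleR_right assms vu
        algebra_simps)
  then have "Re (cinner (scaleR a v + scaleR b u) (scaleR a v + scaleR b u))
      = (a*a) * Re (cinner v v) + (b*b) * Re (cinner u u)" by simp
  moreover note norm_sq_ci[of "scaleR a v + scaleR b u"] norm_sq_ci[of v] norm_sq_ci[of u]
  ultimately show ?thesis by (simp add: power2_eq_square)
qed

end

theorem proposition3p12:
  fixes P :: "'a::chilbert_space \<Rightarrow> 'a" and \<eta> :: real
  assumes "is_orth_proj P"
    and "has_AN P"
    and "\<eta> > 1/2"
  shows "has_ANstar (\<lambda>x. scaleC (complex_of_real \<eta>) x - P x)"
proof -
  let ?T = "\<lambda>x. scaleC (complex_of_real \<eta>) x - P x"
  have idem: "\<And>x. P (P x) = P x" and sa: "\<And>x y. cinner (P x) y = cinner x (P y)"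
    using assms(1) unfolding is_orth_proj_def by auto
  have orth: "\<And>x. cinner (P x) (x - P x) = 0"
    by (simp add: ci_diff_right sa idem)
  have key: "\<And>x. (norm (?T x))^2 = \<eta>^2 * (norm x)^2 - (2*\<eta>-1) * (norm (P x))^2"
  proof -
    fix x
    have e1: "?T x = scaleR \<eta> (x - P x) + scaleR (\<eta>-1) (P x)"
      by (simp add: scaleR_scaleC[symmetric] algebra_simps)
    have e2: "x = scaleR 1 (x - P x) + scaleR 1 (P x)" by simp
    have n1: "(norm (?T x))^2 = \<eta>^2 * (norm (x - P x))^2 + (\<eta>-1)^2 * (norm (P x))^2"
      using e1 norm_sq_orth[OF orth] by metis
    have n2: "(norm x)^2 = (norm (x - P x))^2 + (norm (P x))^2"
      using norm_sq_orth[OF orth, of 1 x 1] e2 by simp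
    show "(norm (?T x))^2 = \<eta>^2 * (norm x)^2 - (2*\<eta>-1) * (norm (P x))^2"
      using n1 n2 by (simp add: power2_eq_square algebra_simps)
  qed
  have Pbound: "\<And>x. norm (P x) \<le> norm x"
  proof -
    fix x
    have "(norm x)^2 = (norm (x - P x))^2 + (norm (P x))^2"
      using norm_sq_orth[OF orth, of 1 x 1] by simp
    then have "(norm (P x))^2 \<le> (norm x)^2" by simp
    then show "norm (P x) \<le> norm x" using power2_le_imp_le by force
  qed
  show ?thesis unfolding has_ANstar_def
  proof (intro allI impI)
    fix M :: "'a set"
    assume M: "closed_csubspace M \<and> M \<noteq> {0}"
    then obtain x0 where x0: "x0 \<in> M" "norm x0 = 1"
      and sup: "norm (P x0) = Sup {norm (P x) | x. x \<in> M \<and> norm x = 1}"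
      using assms(2) unfolding has_AN_def satisfies_N_def by blast
    have bdd: "bdd_above {norm (P x) | x. x \<in> M \<and> norm x = 1}"
    proof (rule bdd_aboveI[where M=1])
      fix y assume "y \<in> {norm (P x) | x. x \<in> M \<and> norm x = 1}"
      then obtain x where "y = norm (P x)" "norm x = 1" by blast
      then show "y \<le> 1" using Pbound[of x] by simp
    qed
    have le: "\<And>x. x \<in> M \<Longrightarrow> norm x = 1 \<Longrightarrow> norm (P x) \<le> norm (P x0)"
      unfolding sup by (rule cSup_upper[OF _ bdd]) blast
    have ge: "\<And>x. x \<in> M \<Longrightarrow> norm x = 1 \<Longrightarrow> norm (?T x0) \<le> norm (?T x)"
    proof -
      fix x assume x: "x \<in> M" "norm x = 1"
      have "(norm (P x))^2 \<le> (norm (P x0))^2" using le[OF x] by (simp add: power_mono)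
      then have "(norm (?T x0))^2 \<le> (norm (?T x))^2"
        using key[of x] key[of x0] x x0 assms(3)
        by (simp add: mult_left_mono)
      then show "norm (?T x0) \<le> norm (?T x)" using power2_le_imp_le by force
    qed
    show "satisfies_Nstar ?T M" unfolding satisfies_Nstar_def
    proof (intro bexI conjI)
      show "norm (?T x0) = Inf {norm (?T x) | x. x \<in> M \<and> norm x = 1}"
        by (rule cInf_eq_minimum[symmetric]) (use x0 ge in auto)
    qed (use x0 in auto)
  qed
qed

end
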